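(* Let $g:\mathbb{R}\to\mathbb{R}$ and suppose that $g$ is not a polynomial on some open interval $I\subset\mathbb{R}$, and that there exists a point of $I$ at which $g$ is infinitely many times differentiable. Let ${\bf x}_1,\ldots,{\bf x}_N$ be distinct points in $\mathbb{R}^d$ (with $N\gg d$), and let $X$ be the $N\times d$ matrix whose $i$-th row is ${\bf x}_i$. Then for any integer $m$ with $d<m\le N$ there exist a $d\times m$ real matrix $W$ and an $m$-dimensional real row vector $b$ such that the $N\times m$ matrix $g(XW+\mathbb{1}b)$ has rank $m$. The same statement holds if $g(t)=\max\{t,0\}$. On the other hand, if $g$ is a polynomial of degree $p$, then for every $d\times m$ matrix $W$ (any $m$) and every $m$-dimensional row vector $b$, the rank of $g(XW+\mathbb{1}b)$ is at most $\binom{p+d}{p}$.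
   Context: $\mathbb{1}$ denotes the $N$-dimensional column vector all of whose entries equal $1$, so $XW+\mathbb{1}b$ is the $N\times m$ matrix whose $(i,j)$ entry is ${\bf x}_i\cdot W_{\cdot j}+b_j$. For a matrix $U$, $g(U)$ denotes the matrix obtained by applying $g$ to every entry of $U$. *)

theory Defs
  imports Complex_Main "Jordan_Normal_Form.DL_Rank" "HOL-Computational_Algebra.Polynomial"
begin

definition pre_act :: "real mat \<Rightarrow> real mat \<Rightarrow> real vec \<Rightarrow> real mat" where
  "pre_act X W b = X * W + mat (dim_row X) (dim_col W) (\<lambda>(i, j). b $ j)"

definition layer :: "(real \<Rightarrow> real) \<Rightarrow> real mat \<Rightarrow> real mat \<Rightarrow> real vec \<Rightarrow> real mat" where
  "layer g X W b = map_mat g (pre_act X W b)"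

definition relu :: "real \<Rightarrow> real" where
  "relu t = max t 0"

definition open_interval :: "real set \<Rightarrow> bool" where
  "open_interval I \<longleftrightarrow> open I \<and> I \<noteq> {} \<and>
     (\<forall>x\<in>I. \<forall>y\<in>I. \<forall>z. x \<le> z \<and> z \<le> y \<longrightarrow> z \<in> I)"

definition polynomial_on :: "(real \<Rightarrow> real) \<Rightarrow> real set \<Rightarrow> bool" where
  "polynomial_on g I \<longleftrightarrow> (\<exists>q :: real poly. \<forall>x\<in>I. g x = poly q x)"

(* g is infinitely many times differentiable at x0: for every n the n-th derivative
   g^(n)(x0) exists, i.e. for every n there are functions D 0 = g, D 1, ..., D n with
   D (k+1) the derivative of D k on a neighbourhood of x0 for all k < n *)
definition smooth_at :: "(real \<Rightarrow> real) \<Rightarrow> real \<Rightarrow> bool" where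
  "smooth_at g x0 \<longleftrightarrow> (\<forall>n. \<exists>e>0. \<exists>D :: nat \<Rightarrow> real \<Rightarrow> real.
      (\<forall>x. \<bar>x - x0\<bar> < e \<longrightarrow> D 0 x = g x) \<and>
      (\<forall>k<n. \<forall>x. \<bar>x - x0\<bar> < e \<longrightarrow> (D k has_real_derivative D (Suc k) x) (at x)))"

end

theory Submission
  imports Defs
begin

lemma poly_zero_on_ball:
  fixes p :: "real poly"
  assumes r: "r > 0" and z: "\<And>x. \<bar>x - y\<bar> < r \<Longrightarrow> poly p x = 0"
  shows "p = 0"
proof (rule ccontr)
  assume "p \<noteq> 0"
  then have "finite {x. poly p x = 0}" by (rule poly_roots_finite)
  moreover have "{y - r<..<y + r} \<subseteq> {x. poly p x = 0}" using z by (auto simp: abs_less_iff)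
  moreover have "infinite {y - r<..<y + r}" using r by (simp add: infinite_Ioo)
  ultimately show False using finite_subset by blast
qed

lemma poly_antideriv: fixes p :: "real poly" shows "\<exists>P. pderiv P = p"
proof -
  let ?P = "\<Sum>i\<le>degree p. monom (coeff p i / of_nat (Suc i)) (Suc i)"
  have "pderiv ?P = (\<Sum>i\<le>degree p. pderiv (monom (coeff p i / of_nat (Suc i)) (Suc i)))"
    using higher_pderiv_sum[of 1] by simp
  also have "... = (\<Sum>i\<le>degree p. monom (coeff p i) i)"
    by (intro sum.cong refl) (simp add: pderiv_monom)
  also have "... = p" by (rule poly_as_sum_of_monoms)
  finally show ?thesis by blast
qed

lemma deriv_zero_if_locally_zero:
  fixes f :: "real \<Rightarrow> real"
  assumes "(f has_real_derivative f') (at a)" "open S" "a \<in> S" "\<And>x. x \<in> S \<Longrightarrow> f x = 0"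
  shows "f' = 0"
proof -
  have "((\<lambda>_. 0) has_real_derivative f') (at a)"
    using has_field_derivative_transform_within_open[OF assms(1-3)] assms(4) by auto
  moreover have "((\<lambda>_::real. 0::real) has_real_derivative 0) (at a)" by simp
  ultimately show ?thesis using DERIV_unique by blast
qed

lemma finite_pos_bounds:
  fixes F :: "real set" assumes "finite F" "\<forall>x\<in>F. x > 0"
  shows "\<exists>l u. l > 0 \<and> u > 0 \<and> (\<forall>x\<in>F. l \<le> x \<and> x \<le> u)"
proof (cases "F = {}")
  case True then show ?thesis by (intro exI[of _ 1]) auto
next
  case False
  show ?thesis
    apply (rule exI[of _ "Min F"], rule exI[of _ "Max F"])
    using assms False by auto
qed

lemma open_U:
  fixes t :: "nat \<Rightarrow> real"
  shows "open {a'. \<forall>i<N. \<bar>a' * t i + b - x0\<bar> < e}"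
proof -
  have "{a'. \<forall>i<N. \<bar>a' * t i + b - x0\<bar> < e} = (\<Inter>i\<in>{..<N}. {a'. \<bar>a' * t i + b - x0\<bar> < e})" by auto
  moreover have "\<And>i. open {a'::real. \<bar>a' * t i + b - x0\<bar> < e}"
    by (intro open_Collect_less continuous_intros)
  ultimately show ?thesis by (auto intro: open_INT)
qed

lemma right_ext:
  fixes h :: "real \<Rightarrow> real" and t c :: "nat \<Rightarrow> real"
  assumes inj: "inj_on t {..<N}" and cj: "\<exists>i<N. c i \<noteq> 0"
    and eq: "\<And>a b. (\<Sum>i<N. c i * h (a * t i + b)) = 0"
    and e: "e > 0" and z: "\<And>x. \<bar>x - x0\<bar> < e \<Longrightarrow> h x = 0"
    and y0: "y > x0 - e"
  shows "h y = 0"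
proof -
  define S where "S = {i. i < N \<and> c i \<noteq> 0}"
  have finS: "finite S" and neS: "S \<noteq> {}" using cj by (auto simp: S_def)
  have "Max (t ` S) \<in> t ` S" using finS neS by simp
  then obtain j where jS: "j \<in> S" and jv: "t j = Max (t ` S)" by auto
  have jmax: "\<forall>i\<in>S. t i \<le> t j" using jv finS by simp
  have cjz: "c j \<noteq> 0" using jS by (simp add: S_def)
  have eqS: "c j * h (a * t j + b) + (\<Sum>i\<in>S-{j}. c i * h (a * t i + b)) = 0" for a b
  proof -
    have "(\<Sum>i<N. c i * h (a * t i + b)) = (\<Sum>i\<in>S. c i * h (a * t i + b))"
      by (rule sum.mono_neutral_right) (auto simp: S_def)
    also have "... = c j * h (a*t j + b) + (\<Sum>i\<in>S-{j}. c i * h (a * t i + b))"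
      using sum.remove[OF finS jS] by simp
    finally show ?thesis using eq by simp
  qed
  have lt: "\<forall>i\<in>S-{j}. t i < t j"
  proof
    fix i assume i: "i \<in> S-{j}"
    have "t i \<noteq> t j" using inj i jS by (auto simp: S_def inj_on_def)
    then show "t i < t j" using jmax i by force
  qed
  obtain l u where lu: "l > 0" "u > 0" "\<forall>x\<in>(\<lambda>i. t j - t i) ` (S-{j}). l \<le> x \<and> x \<le> u"
    using finite_pos_bounds[of "(\<lambda>i. t j - t i) ` (S-{j})"] finS lt by auto
  define a where "a = e / u"
  define \<delta> where "\<delta> = a * l"
  have apos: "a > 0" using e lu by (simp add: a_def)
  have dpos: "\<delta> > 0" using apos lu by (simp add: \<delta>_def)
  have bnd: "\<delta> \<le> a * (t j - t i) \<and> a * (t j - t i) \<le> e" if i: "i \<in> S-{j}" for i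
  proof -
    have "l \<le> t j - t i" "t j - t i \<le> u" using lu(3) i by auto
    then have "a * l \<le> a * (t j - t i)" "a * (t j - t i) \<le> a * u"
      using apos by (auto intro: mult_left_mono)
    moreover have "a * u = e" using lu by (simp add: a_def)
    ultimately show ?thesis by (simp add: \<delta>_def)
  qed
  have step: "\<forall>y. x0 - e < y \<and> y < x0 + e + real n * \<delta> \<longrightarrow> h y = 0" for n
  proof (induction n)
    case 0 then show ?case using z by (auto simp: abs_less_iff)
  next
    case (Suc n)
    show ?case
    proof (intro allI impI)
      fix y assume y: "x0 - e < y \<and> y < x0 + e + real (Suc n) * \<delta>"
      show "h y = 0"
      proof (cases "y < x0 + e + real n * \<delta>")
        case True then show ?thesis using Suc y by auto
      next
        case False
        have nd: "real n * \<delta> \<ge> 0" using dpos by simp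
        have sd: "real (Suc n) * \<delta> = real n * \<delta> + \<delta>" by (simp add: algebra_simps)
        have "\<forall>i\<in>S-{j}. h (a * t i + (y - a * t j)) = 0"
        proof
          fix i assume i: "i \<in> S-{j}"
          have "a * t i + (y - a * t j) = y - a * (t j - t i)" by (simp add: algebra_simps)
          moreover have "x0 - e < y - a*(t j - t i)" "y - a*(t j - t i) < x0 + e + real n * \<delta>"
            using bnd[OF i] False y nd e sd by linarith+
          ultimately show "h (a * t i + (y - a * t j)) = 0" using Suc.IH by simp
        qed
        then have "c j * h (a * t j + (y - a * t j)) = 0" using eqS[of a "y - a * t j"] by simp
        then show "h y = 0" using cjz by simp
      qed
    qed
  qed
  obtain n where "y - x0 < real n * \<delta>" using reals_Archimedean3[OF dpos] by blast
  then show "h y = 0" using step[of n] y0 e by auto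
qed

lemma full_ext:
  fixes h :: "real \<Rightarrow> real" and t c :: "nat \<Rightarrow> real"
  assumes inj: "inj_on t {..<N}" and cj: "\<exists>i<N. c i \<noteq> 0"
    and eq: "\<And>a b. (\<Sum>i<N. c i * h (a * t i + b)) = 0"
    and e: "e > 0" and z: "\<And>x. \<bar>x - x0\<bar> < e \<Longrightarrow> h x = 0"
  shows "h y = 0"
proof (cases "y > x0 - e")
  case True then show ?thesis using right_ext[OF inj cj eq e z] by blast
next
  case False
  have inj': "inj_on (\<lambda>i. - t i) {..<N}" using inj by (auto simp: inj_on_def)
  have eq': "(\<Sum>i<N. c i * (\<lambda>x. h (- x)) (a * (- t i) + b)) = 0" for a b
  proof -
    have "(\<Sum>i<N. c i * (\<lambda>x. h (- x)) (a * (- t i) + b)) = (\<Sum>i<N. c i * h (a * t i + (- b)))"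
      by (simp add: algebra_simps)
    then show ?thesis using eq[of a "- b"] by simp
  qed
  have z': "(\<lambda>x. h (- x)) x = 0" if "\<bar>x - (- x0)\<bar> < e" for x
    using z[of "-x"] that by (simp add: abs_minus_commute algebra_simps)
  have "-y > -x0 - e" using False e by linarith
  from right_ext[OF inj' cj eq' e z' this] show ?thesis by simp
qed


lemma smooth_ann:
  fixes g :: "real \<Rightarrow> real" and t c :: "nat \<Rightarrow> real"
  assumes e: "e > 0" and D0: "\<And>x. \<bar>x - x0\<bar> < e \<Longrightarrow> D 0 x = g x"
    and DD: "\<And>k x. k < n \<Longrightarrow> \<bar>x - x0\<bar> < e \<Longrightarrow> (D k has_real_derivative D (Suc k) x) (at x)"
    and eq: "\<And>a b. (\<Sum>i<N. c i * g (a * t i + b)) = 0"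
  shows "k \<le> n \<Longrightarrow> (\<forall>i<N. \<bar>a * t i + b - x0\<bar> < e) \<Longrightarrow> (\<Sum>i<N. c i * t i ^ k * D k (a * t i + b)) = 0"
proof (induction k arbitrary: a)
  case 0
  have "(\<Sum>i<N. c i * t i ^ 0 * D 0 (a * t i + b)) = (\<Sum>i<N. c i * g (a * t i + b))"
    using 0 D0 by (intro sum.cong) auto
  then show ?case using eq[of a b] by simp
next
  case (Suc k)
  define U where "U = {a'. \<forall>i<N. \<bar>a' * t i + b - x0\<bar> < e}"
  have oU: "open U" unfolding U_def by (rule open_U)
  have aU: "a \<in> U" using Suc.prems by (simp add: U_def)
  have zero: "(\<Sum>i<N. c i * t i ^ k * D k (a' * t i + b)) = 0" if "a' \<in> U" for a'
    using Suc.IH[of a'] Suc.prems(1) that by (simp add: U_def)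
  have der: "((\<lambda>a'. \<Sum>i<N. c i * t i ^ k * D k (a' * t i + b)) has_real_derivative
      (\<Sum>i<N. c i * t i ^ k * (D (Suc k) (a * t i + b) * t i))) (at a)"
  proof (rule DERIV_sum)
    fix i assume i: "i \<in> {..<N}"
    have d1: "(D k has_real_derivative D (Suc k) (a * t i + b)) (at (a * t i + b))"
      using DD[of k "a * t i + b"] Suc.prems i by auto
    have d2: "((\<lambda>a'. a' * t i + b) has_real_derivative t i) (at a)"
      by (auto intro!: derivative_eq_intros)
    have "((\<lambda>a'. D k (a' * t i + b)) has_real_derivative D (Suc k) (a * t i + b) * t i) (at a)"
      using DERIV_chain2[OF d1 d2] .
    then show "((\<lambda>a'. c i * t i ^ k * D k (a' * t i + b)) has_real_derivative
      c i * t i ^ k * (D (Suc k) (a * t i + b) * t i)) (at a)"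
      by (rule DERIV_cmult)
  qed
  have "(\<Sum>i<N. c i * t i ^ k * (D (Suc k) (a * t i + b) * t i)) = 0"
    using deriv_zero_if_locally_zero[OF der oU aU zero] by blast
  moreover have "(\<Sum>i<N. c i * t i ^ k * (D (Suc k) (a * t i + b) * t i)) =
      (\<Sum>i<N. c i * t i ^ Suc k * D (Suc k) (a * t i + b))"
    by (intro sum.cong) (auto simp: algebra_simps)
  ultimately show ?case by simp
qed

lemma ann_poly:
  fixes g :: "real \<Rightarrow> real" and t c :: "nat \<Rightarrow> real"
  assumes sm: "smooth_at g x0" and inj: "inj_on t {..<N}" and cj: "\<exists>i<N. c i \<noteq> 0"
    and eq: "\<And>a b. (\<Sum>i<N. c i * g (a * t i + b)) = 0"
  shows "\<exists>q. \<forall>x. g x = poly q x"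
proof -
  have "\<exists>k. (\<Sum>i<N. c i * t i ^ k) \<noteq> 0"
  proof (rule ccontr)
    assume "\<not> ?thesis"
    then have allk: "\<And>k. (\<Sum>i<N. c i * t i ^ k) = 0" by auto
    have polyz: "(\<Sum>i<N. c i * poly L (t i)) = 0" for L
    proof -
      have "(\<Sum>i<N. c i * poly L (t i)) = (\<Sum>i<N. c i * (\<Sum>r\<le>degree L. coeff L r * t i ^ r))"
        by (simp add: poly_altdef)
      also have "... = (\<Sum>i<N. \<Sum>r\<le>degree L. coeff L r * (c i * t i ^ r))"
        by (simp add: sum_distrib_left mult_ac)
      also have "... = (\<Sum>r\<le>degree L. \<Sum>i<N. coeff L r * (c i * t i ^ r))"
        by (rule sum.swap)
      also have "... = (\<Sum>r\<le>degree L. coeff L r * (\<Sum>i<N. c i * t i ^ r))"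
        by (simp add: sum_distrib_left)
      also have "... = 0" using allk by simp
      finally show ?thesis .
    qed
    obtain j where j: "j < N" "c j \<noteq> 0" using cj by auto
    define L where "L = (\<Prod>i\<in>{..<N}-{j}. [:- t i, 1:])"
    have Lt: "poly L x = (\<Prod>i'\<in>{..<N}-{j}. x - t i')" for x by (simp add: L_def poly_prod)
    have "(\<Sum>i<N. c i * poly L (t i)) = c j * poly L (t j) + (\<Sum>i\<in>{..<N}-{j}. c i * poly L (t i))"
      using sum.remove[of "{..<N}" j] j by simp
    also have "(\<Sum>i\<in>{..<N}-{j}. c i * poly L (t i)) = 0"
    proof (rule sum.neutral, rule ballI)
      fix i assume i: "i \<in> {..<N}-{j}"
      have "(\<Prod>i'\<in>{..<N}-{j}. t i - t i') = 0"
        using i by (intro prod_zero) auto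
      then show "c i * poly L (t i) = 0" by (simp add: Lt)
    qed
    also have "poly L (t j) \<noteq> 0"
    proof -
      have "\<forall>i'\<in>{..<N}-{j}. t j - t i' \<noteq> 0" using inj j by (auto simp: inj_on_def)
      then show ?thesis by (simp add: Lt)
    qed
    then have "c j * poly L (t j) + 0 \<noteq> 0" using j by simp
    finally show False using polyz by simp
  qed
  then obtain k0 where k0: "(\<Sum>i<N. c i * t i ^ k0) \<noteq> 0" by blast
  from sm have "\<exists>e>0. \<exists>D :: nat \<Rightarrow> real \<Rightarrow> real.
      (\<forall>x. \<bar>x - x0\<bar> < e \<longrightarrow> D 0 x = g x) \<and>
      (\<forall>k<k0. \<forall>x. \<bar>x - x0\<bar> < e \<longrightarrow> (D k has_real_derivative D (Suc k) x) (at x))"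
    unfolding smooth_at_def by (rule spec)
  then obtain e D where e: "e > 0" and D0': "\<forall>x. \<bar>x - x0\<bar> < e \<longrightarrow> D 0 x = g x"
    and DD': "\<forall>k<k0. \<forall>x. \<bar>x - x0\<bar> < e \<longrightarrow> (D k has_real_derivative D (Suc k) x) (at x)"
    by blast
  have D0: "\<And>x. \<bar>x - x0\<bar> < e \<Longrightarrow> D 0 x = g x" using D0' by blast
  have DD: "\<And>k x. k < k0 \<Longrightarrow> \<bar>x - x0\<bar> < e \<Longrightarrow> (D k has_real_derivative D (Suc k) x) (at x)"
    using DD' by blast
  have Dk0: "D k0 x = 0" if x: "\<bar>x - x0\<bar> < e" for x
  proof -
    have "(\<Sum>i<N. c i * t i ^ k0 * D k0 (0 * t i + x)) = 0"
      by (rule smooth_ann[OF e D0 DD eq]) (use x in auto)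
    then have "(\<Sum>i<N. c i * t i ^ k0) * D k0 x = 0" by (simp add: sum_distrib_right)
    then show "D k0 x = 0" using k0 by simp
  qed
  have desc: "j \<le> k0 \<Longrightarrow> \<exists>q. \<forall>x. \<bar>x - x0\<bar> < e \<longrightarrow> D (k0 - j) x = poly q x" for j
  proof (induction j)
    case 0 show ?case using Dk0 by (intro exI[of _ 0]) auto
  next
    case (Suc j)
    then obtain q where q: "\<forall>x. \<bar>x - x0\<bar> < e \<longrightarrow> D (k0 - j) x = poly q x" by auto
    obtain P where P: "pderiv P = q" using poly_antideriv by blast
    define k where "k = k0 - Suc j"
    have kk: "Suc k = k0 - j" "k < k0" using Suc.prems by (auto simp: k_def)
    define f where "f = (\<lambda>x. D k x - poly P x)"
    have fd: "(f has_real_derivative 0) (at x)" if x: "\<bar>x - x0\<bar> < e" for x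
    proof -
      have "(D k has_real_derivative D (Suc k) x) (at x)" using DD[OF kk(2) x] .
      moreover have "(poly P has_real_derivative poly q x) (at x)" using poly_DERIV[of P x] P by simp
      ultimately have "(f has_real_derivative D (Suc k) x - poly q x) (at x)"
        unfolding f_def by (rule DERIV_diff)
      moreover have "D (Suc k) x = poly q x" using q x kk by simp
      ultimately show ?thesis by simp
    qed
    have fc: "f x = f x0" if x: "\<bar>x - x0\<bar> < e" for x
      by (rule DERIV_isconst3[of "x0 - e" "x0 + e"]) (use e fd x in \<open>auto simp: abs_less_iff\<close>)
    show ?case
    proof (intro exI[of _ "P + [:f x0:]"] allI impI)
      fix x assume x: "\<bar>x - x0\<bar> < e"
      have "D k x - poly P x = f x0" using fc[OF x] by (simp add: f_def)
      then show "D (k0 - Suc j) x = poly (P + [:f x0:]) x" by (simp add: k_def[symmetric])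
    qed
  qed
  from desc[of k0] obtain q where q0: "\<forall>x. \<bar>x - x0\<bar> < e \<longrightarrow> D 0 x = poly q x" by auto
  have q: "g x = poly q x" if "\<bar>x - x0\<bar> < e" for x using q0 D0 that by auto
  have step1: "(\<Sum>i<N. c i * poly q (a * t i + b)) = 0" if b: "\<bar>b - x0\<bar> < e" for a b
  proof -
    define U where "U = {a'. \<forall>i<N. \<bar>a' * t i + b - x0\<bar> < e}"
    have oU: "open U" unfolding U_def by (rule open_U)
    have "0 \<in> U" using b by (simp add: U_def)
    then obtain r where r: "r > 0" "\<forall>y. dist y 0 < r \<longrightarrow> y \<in> U" using oU unfolding open_dist by blast
    define P where "P = (\<Sum>i<N. Polynomial.smult (c i) (pcompose q [:b, t i:]))"
    have Pv: "poly P a' = (\<Sum>i<N. c i * poly q (a' * t i + b))" for a'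
      by (simp add: P_def poly_sum poly_pcompose algebra_simps)
    have "P = 0"
    proof (rule poly_zero_on_ball[OF r(1), where y = 0])
      fix a' :: real assume "\<bar>a' - 0\<bar> < r"
      then have "a' \<in> U" using r(2) by (simp add: dist_real_def)
      then have "\<forall>i<N. g (a' * t i + b) = poly q (a' * t i + b)" using q by (auto simp: U_def)
      then have "(\<Sum>i<N. c i * poly q (a' * t i + b)) = (\<Sum>i<N. c i * g (a' * t i + b))"
        by (intro sum.cong) auto
      then show "poly P a' = 0" using eq[of a' b] Pv by simp
    qed
    then show ?thesis using Pv[of a] by simp
  qed
  have qeq: "(\<Sum>i<N. c i * poly q (a * t i + b)) = 0" for a b
  proof -
    define P where "P = (\<Sum>i<N. Polynomial.smult (c i) (pcompose q [:a * t i, 1:]))"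
    have Pv: "poly P b' = (\<Sum>i<N. c i * poly q (a * t i + b'))" for b'
      by (simp add: P_def poly_sum poly_pcompose)
    have "P = 0" by (rule poly_zero_on_ball[OF e]) (use step1 Pv in auto)
    then show ?thesis using Pv[of b] by simp
  qed
  define h where "h = (\<lambda>x. g x - poly q x)"
  have heq: "(\<Sum>i<N. c i * h (a * t i + b)) = 0" for a b
    using eq[of a b] qeq[of a b] by (simp add: h_def right_diff_distrib sum_subtractf)
  have hz: "h x = 0" if "\<bar>x - x0\<bar> < e" for x using q that by (simp add: h_def)
  have "h y = 0" for y using full_ext[OF inj cj heq e hz] .
  then show ?thesis by (auto simp: h_def)
qed


lemma choose_s:
  fixes X :: "real mat"
  assumes X: "X \<in> carrier_mat N d" and dr: "distinct (rows X)"
  shows "\<exists>s. inj_on (\<lambda>i. \<Sum>k<d. X $$ (i,k) * s ^ k) {..<N}"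
proof -
  define P where "P i = (\<Sum>k<d. monom (X $$ (i,k)) k)" for i
  have coeffP: "coeff (P i) k = X $$ (i,k)" if "k < d" for i k
    using that by (simp add: P_def coeff_sum coeff_monom)
  have polyP: "poly (P i) s = (\<Sum>k<d. X $$ (i,k) * s ^ k)" for i s
    by (simp add: P_def poly_sum poly_monom)
  have Pne: "P i - P j \<noteq> 0" if "i < N" "j < N" "i \<noteq> j" for i j
  proof
    assume "P i - P j = 0"
    then have "P i = P j" by simp
    then have "row X i = row X j"
      using X coeffP by (intro eq_vecI) (metis carrier_matD(2) index_row(1) index_row(2) that(1) that(2) carrier_matD(1), simp)
    moreover have "rows X ! i = row X i" "rows X ! j = row X j" using X that by auto
    moreover have "i < length (rows X)" "j < length (rows X)" using X that by auto
    ultimately show False using dr that nth_eq_iff_index_eq by metis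
  qed
  define Q where "Q i j = P i - P j" for i j
  have fin: "finite {s. poly (Q i j) s = 0}" if "i < N" "j < N" "i \<noteq> j" for i j
    using Pne[OF that] poly_roots_finite unfolding Q_def by blast
  define B where "B = (\<Union>i<N. \<Union>j<N. if i = j then {} else {s. poly (Q i j) s = 0})"
  have "finite B" unfolding B_def using fin by (intro finite_UN_I) auto
  then obtain s where s: "s \<notin> B" using ex_new_if_finite[OF infinite_UNIV_char_0] by blast
  show ?thesis
  proof (rule exI[of _ s], rule inj_onI)
    fix i j assume ij: "i \<in> {..<N}" "j \<in> {..<N}"
      and eq: "(\<Sum>k<d. X $$ (i,k) * s ^ k) = (\<Sum>k<d. X $$ (j,k) * s ^ k)"
    show "i = j"
    proof (rule ccontr)
      assume "i \<noteq> j"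
      then have "s \<notin> {s. poly (Q i j) s = 0}" using s ij unfolding B_def by auto
      then show False using eq by (simp add: polyP Q_def)
    qed
  qed
qed

lemma annihilator:
  fixes F :: "nat \<Rightarrow> nat \<Rightarrow> real"
  assumes k: "k < N"
  shows "\<exists>c. (\<exists>i<N. c i \<noteq> 0) \<and> (\<forall>j<k. (\<Sum>i<N. c i * F j i) = 0)"
proof -
  define A where "A = mat\<^sub>r N N (\<lambda>r. if r = N - 1 then 0\<^sub>v N else vec N (\<lambda>i. if r < k then F r i else 0))"
  have "det A = 0" unfolding A_def by (rule det_row_0) (use k in auto)
  moreover have A: "A \<in> carrier_mat N N" unfolding A_def by auto
  ultimately obtain v where v: "v \<in> carrier_vec N" "v \<noteq> 0\<^sub>v N" "A *\<^sub>v v = 0\<^sub>v N"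
    using det_0_iff_vec_prod_zero_field[OF A] by blast
  have "\<exists>i<N. v $ i \<noteq> 0"
  proof (rule ccontr)
    assume "\<not> ?thesis"
    then have "v = 0\<^sub>v N" using v(1) by (intro eq_vecI) auto
    then show False using v(2) by simp
  qed
  moreover have "(\<Sum>i<N. v $ i * F j i) = 0" if j: "j < k" for j
  proof -
    have jN: "j < N" "j \<noteq> N - 1" using j k by auto
    have "(A *\<^sub>v v) $ j = 0" using v(3) jN by simp
    moreover have "(A *\<^sub>v v) $ j = row A j \<bullet> v" using A jN by simp
    moreover have "row A j = vec N (\<lambda>i. F j i)" unfolding A_def using jN j by simp
    ultimately have "(\<Sum>i<N. F j i * v $ i) = 0"
      using v(1) by (simp add: scalar_prod_def lessThan_atLeast0)
    then show ?thesis by (simp add: mult.commute)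
  qed
  ultimately show ?thesis by blast
qed


lemma indep_pairs:
  fixes G :: "real \<times> real \<Rightarrow> nat \<Rightarrow> real"
  assumes ann: "\<And>c. (\<forall>p. (\<Sum>i<N. c i * G p i) = 0) \<Longrightarrow> \<forall>i<N. c i = 0"
  shows "k \<le> N \<Longrightarrow> \<exists>ps. \<forall>u. (\<forall>i<N. (\<Sum>j<k. G (ps j) i * u j) = 0) \<longrightarrow> (\<forall>j<k. u j = 0)"
proof (induction k)
  case 0 then show ?case by auto
next
  case (Suc k)
  then obtain ps where ps: "\<forall>u. (\<forall>i<N. (\<Sum>j<k. G (ps j) i * u j) = 0) \<longrightarrow> (\<forall>j<k. u j = 0)" by auto
  have kN: "k < N" using Suc.prems by simp
  have "\<exists>p. \<not> (\<exists>u. \<forall>i<N. G p i = (\<Sum>j<k. G (ps j) i * u j))"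
  proof (rule ccontr)
    assume "\<not> ?thesis"
    then have sp: "\<forall>p. \<exists>u. \<forall>i<N. G p i = (\<Sum>j<k. G (ps j) i * u j)" by blast
    obtain c where c: "\<exists>i<N. c i \<noteq> 0" "\<forall>j<k. (\<Sum>i<N. c i * G (ps j) i) = 0"
      using annihilator[OF kN, of "\<lambda>j i. G (ps j) i"] by blast
    have "(\<Sum>i<N. c i * G p i) = 0" for p
    proof -
      obtain u where u: "\<forall>i<N. G p i = (\<Sum>j<k. G (ps j) i * u j)" using sp by blast
      have "(\<Sum>i<N. c i * G p i) = (\<Sum>i<N. c i * (\<Sum>j<k. G (ps j) i * u j))"
        using u by (intro sum.cong) auto
      also have "... = (\<Sum>i<N. \<Sum>j<k. u j * (c i * G (ps j) i))"
        by (simp add: sum_distrib_left mult_ac)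
      also have "... = (\<Sum>j<k. \<Sum>i<N. u j * (c i * G (ps j) i))" by (rule sum.swap)
      also have "... = (\<Sum>j<k. u j * (\<Sum>i<N. c i * G (ps j) i))" by (simp add: sum_distrib_left)
      also have "... = 0" using c(2) by simp
      finally show ?thesis .
    qed
    then have "\<forall>i<N. c i = 0" using ann by blast
    then show False using c(1) by blast
  qed
  then obtain p where p: "\<not> (\<exists>u. \<forall>i<N. G p i = (\<Sum>j<k. G (ps j) i * u j))" by blast
  show ?case
  proof (rule exI[of _ "ps(k := p)"], rule allI, rule impI)
    fix u assume u: "\<forall>i<N. (\<Sum>j<Suc k. G ((ps(k := p)) j) i * u j) = 0"
    have u': "(\<Sum>j<k. G (ps j) i * u j) + G p i * u k = 0" if "i < N" for i
    proof -
      have "(\<Sum>j<k. G ((ps(k := p)) j) i * u j) = (\<Sum>j<k. G (ps j) i * u j)"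
        by (intro sum.cong) auto
      then show ?thesis using u that by simp
    qed
    have uk: "u k = 0"
    proof (rule ccontr)
      assume nz: "u k \<noteq> 0"
      have "\<forall>i<N. G p i = (\<Sum>j<k. G (ps j) i * (- u j / u k))"
      proof (intro allI impI)
        fix i assume i: "i < N"
        have s1: "(\<Sum>j<k. G (ps j) i * (- u j / u k)) = (\<Sum>j<k. G (ps j) i * u j) * (- 1 / u k)"
          unfolding sum_distrib_right by (intro sum.cong refl) simp
        have s2: "(\<Sum>j<k. G (ps j) i * u j) = - (G p i * u k)" using u'[OF i] by linarith
        show "G p i = (\<Sum>j<k. G (ps j) i * (- u j / u k))" unfolding s1 s2 using nz by simp
      qed
      then have "\<exists>u. \<forall>i<N. G p i = (\<Sum>j<k. G (ps j) i * u j)"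
        by (rule exI[of _ "\<lambda>j. - u j / u k"])
      then show False using p by blast
    qed
    then have "\<forall>i<N. (\<Sum>j<k. G (ps j) i * u j) = 0" using u' by simp
    then have "\<forall>j<k. u j = 0" using ps by blast
    then show "\<forall>j<Suc k. u j = 0" using uk less_Suc_eq by auto
  qed
qed


lemma (in vec_space) full_rank_kernel:
  assumes A: "A \<in> carrier_mat n nc"
    and ker: "\<And>v. v \<in> carrier_vec nc \<Longrightarrow> A *\<^sub>v v = 0\<^sub>v n \<Longrightarrow> v = 0\<^sub>v nc"
  shows "rank A = nc"
proof -
  have dist: "distinct (cols A)"
  proof (rule ccontr)
    assume "\<not> distinct (cols A)"
    then obtain i j where ij: "i \<noteq> j" "cols A ! i = cols A ! j" "i < length (cols A)" "j < length (cols A)"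
      using distinct_conv_nth by blast
    then have ij2: "i < nc" "j < nc" "col A i = col A j" using A by auto
    define v where "v = (vec nc (\<lambda>l. (if l = i then 1 else 0) - (if l = j then 1 else 0)) :: 'a vec)"
    have vc: "v \<in> carrier_vec nc" by (simp add: v_def)
    have "A *\<^sub>v v = 0\<^sub>v n"
    proof (rule eq_vecI)
      fix r assume "r < dim_vec (0\<^sub>v n :: 'a vec)"
      then have r: "r < n" by simp
      have "(A *\<^sub>v v) $ r = (\<Sum>l\<in>{0..<nc}. A $$ (r,l) * ((if l = i then 1 else 0) - (if l = j then 1 else 0)))"
        using A r by (simp add: scalar_prod_def v_def)
      also have "... = (\<Sum>l\<in>{0..<nc}. (if l = i then A $$ (r,l) else 0) - (if l = j then A $$ (r,l) else 0))"
        by (intro sum.cong refl) simp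
      also have "... = (\<Sum>l\<in>{0..<nc}. (if l = i then A $$ (r,l) else 0)) - (\<Sum>l\<in>{0..<nc}. (if l = j then A $$ (r,l) else 0))"
        by (rule sum_subtractf)
      also have "... = A $$ (r,i) - A $$ (r,j)" using ij2 by simp
      also have "A $$ (r,i) = A $$ (r,j)"
      proof -
        have "col A i $ r = col A j $ r" using ij2 by simp
        then show ?thesis using A r ij2(1,2) by simp
      qed
      finally show "(A *\<^sub>v v) $ r = 0\<^sub>v n $ r" using r by simp
    qed (use A in simp)
    then have "v = 0\<^sub>v nc" using ker vc by blast
    moreover have "v $ i = 1" using ij ij2 by (simp add: v_def)
    ultimately show False using ij2 by simp
  qed
  have "lin_indpt (set (cols A))"
  proof
    assume "lin_dep (set (cols A))"
    then obtain v where "v \<in> carrier_vec nc" "v \<noteq> 0\<^sub>v nc" "A *\<^sub>v v = 0\<^sub>v n"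
      using lin_depE[OF A _ dist] by blast
    then show False using ker by blast
  qed
  then show ?thesis using lin_indpt_full_rank[OF A dist] by blast
qed


lemma layer_entry:
  assumes X: "X \<in> carrier_mat N d" and W: "W \<in> carrier_mat d m" and i: "i < N" and j: "j < m"
  shows "layer g X W b $$ (i,j) = g ((\<Sum>k<d. X $$ (i,k) * W $$ (k,j)) + b $ j)"
proof -
  have "(X * W) $$ (i,j) = (\<Sum>k<d. X $$ (i,k) * W $$ (k,j))"
    using X W i j by (simp add: scalar_prod_def lessThan_atLeast0)
  then show ?thesis using X W i j by (simp add: layer_def pre_act_def)
qed

lemma nonpoly_main:
  fixes g :: "real \<Rightarrow> real" and X :: "real mat"
  assumes X: "X \<in> carrier_mat N d" and dr: "distinct (rows X)"
    and sm: "smooth_at g x0" and np: "\<not> (\<exists>q. \<forall>x. g x = poly q x)" and m: "m \<le> N"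
  shows "\<exists>W b. W \<in> carrier_mat d m \<and> b \<in> carrier_vec m \<and> vec_space.rank N (layer g X W b) = m"
proof -
  obtain s where inj: "inj_on (\<lambda>i. \<Sum>k<d. X $$ (i,k) * s ^ k) {..<N}" using choose_s[OF X dr] by blast
  define t where "t i = (\<Sum>k<d. X $$ (i,k) * s ^ k)" for i
  have injt: "inj_on t {..<N}" using inj unfolding t_def .
  define G where "G p i = g (fst p * t i + snd p)" for p :: "real \<times> real" and i
  have ann: "\<forall>i<N. c i = 0" if h: "\<forall>p. (\<Sum>i<N. c i * G p i) = 0" for c
  proof (rule ccontr)
    assume "\<not> ?thesis"
    then have cj: "\<exists>i<N. c i \<noteq> 0" by auto
    have eq: "(\<Sum>i<N. c i * g (a * t i + b)) = 0" for a b using h[rule_format, of "(a,b)"] by (simp add: G_def)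
    show False using ann_poly[OF sm injt cj eq] np by blast
  qed
  have "\<exists>ps. \<forall>u. (\<forall>i<N. (\<Sum>j<m. G (ps j) i * u j) = 0) \<longrightarrow> (\<forall>j<m. u j = 0)"
    by (rule indep_pairs[where G=G and N=N and k=m, OF ann m])
  then obtain ps where ps: "\<forall>u. (\<forall>i<N. (\<Sum>j<m. G (ps j) i * u j) = 0) \<longrightarrow> (\<forall>j<m. u j = 0)"
    by blast
  define W where "W = mat d m (\<lambda>(k,j). fst (ps j) * s ^ k)"
  define b where "b = vec m (\<lambda>j. snd (ps j))"
  have Wc: "W \<in> carrier_mat d m" by (simp add: W_def)
  have bc: "b \<in> carrier_vec m" by (simp add: b_def)
  define A where "A = layer g X W b"
  have Ac: "A \<in> carrier_mat N m" using X by (simp add: A_def layer_def pre_act_def W_def)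
  have Aij: "A $$ (i,j) = G (ps j) i" if ij: "i < N" "j < m" for i j
  proof -
    have "A $$ (i,j) = g ((\<Sum>k<d. X $$ (i,k) * W $$ (k,j)) + b $ j)"
      unfolding A_def by (rule layer_entry[OF X Wc ij])
    also have "(\<Sum>k<d. X $$ (i,k) * W $$ (k,j)) = fst (ps j) * t i"
      using ij by (simp add: W_def t_def sum_distrib_left mult_ac)
    finally show ?thesis using ij by (simp add: G_def b_def)
  qed
  have "vec_space.rank N A = m"
  proof (rule vec_space.full_rank_kernel[OF Ac])
    fix v :: "real vec" assume v: "v \<in> carrier_vec m" "A *\<^sub>v v = 0\<^sub>v N"
    have "(\<Sum>j<m. G (ps j) i * v $ j) = 0" if i: "i < N" for i
    proof -
      have "(A *\<^sub>v v) $ i = 0" using v(2) i by simp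
      moreover have "(A *\<^sub>v v) $ i = (\<Sum>j<m. A $$ (i,j) * v $ j)"
        using Ac v(1) i by (auto simp: scalar_prod_def lessThan_atLeast0 intro!: sum.cong)
      moreover have "(\<Sum>j<m. A $$ (i,j) * v $ j) = (\<Sum>j<m. G (ps j) i * v $ j)"
        using Aij i by (intro sum.cong) auto
      ultimately show ?thesis by simp
    qed
    then have "\<forall>j<m. v $ j = 0" using ps by blast
    then show "v = 0\<^sub>v m" using v(1) by (intro eq_vecI) auto
  qed
  then show ?thesis using Wc bc A_def by blast
qed


lemma relu_smooth: "smooth_at relu 1"
  unfolding smooth_at_def
proof (intro allI)
  fix n :: nat
  define D where "D k = (if k = 0 then relu else if k = 1 then (\<lambda>_. 1) else (\<lambda>_. 0))" for k :: nat
  have d0: "(relu has_real_derivative 1) (at x)" if "\<bar>x - 1\<bar> < 1" for x :: real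
  proof (rule has_field_derivative_transform_within_open[of "\<lambda>x. x" 1 x "{0<..}"])
    show "((\<lambda>x. x) has_real_derivative 1) (at x)" by simp
  qed (use that in \<open>auto simp: relu_def\<close>)
  have "(\<forall>x. \<bar>x - 1\<bar> < 1 \<longrightarrow> D 0 x = relu x) \<and>
      (\<forall>k<n. \<forall>x. \<bar>x - 1\<bar> < 1 \<longrightarrow> (D k has_real_derivative D (Suc k) x) (at x))"
  proof (intro conjI allI impI)
    fix k x assume k: "k < n" and x: "\<bar>x - (1::real)\<bar> < 1"
    show "(D k has_real_derivative D (Suc k) x) (at x)"
    proof (cases "k = 0")
      case True then show ?thesis using d0[OF x] by (simp add: D_def)
    next
      case False then show ?thesis by (simp add: D_def)
    qed
  qed (simp add: D_def)
  then have "\<exists>D :: nat \<Rightarrow> real \<Rightarrow> real. (\<forall>x. \<bar>x - 1\<bar> < 1 \<longrightarrow> D 0 x = relu x) \<and>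
      (\<forall>k<n. \<forall>x. \<bar>x - 1\<bar> < 1 \<longrightarrow> (D k has_real_derivative D (Suc k) x) (at x))"
    by (rule exI[of _ D])
  moreover have "(1::real) > 0" by simp
  ultimately show "\<exists>e>0. \<exists>D :: nat \<Rightarrow> real \<Rightarrow> real. (\<forall>x. \<bar>x - 1\<bar> < e \<longrightarrow> D 0 x = relu x) \<and>
      (\<forall>k<n. \<forall>x. \<bar>x - 1\<bar> < e \<longrightarrow> (D k has_real_derivative D (Suc k) x) (at x))"
    by blast
qed

lemma relu_not_poly: "\<not> (\<exists>q. \<forall>x. relu x = poly q x)"
proof
  assume "\<exists>q. \<forall>x. relu x = poly q x"
  then obtain q where q: "\<forall>x. relu x = poly q x" by blast
  have "q = 0"
  proof (rule poly_zero_on_ball[where r=1 and y="-1"])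
    fix x :: real assume "\<bar>x - -1\<bar> < 1"
    then have "x < 0" by auto
    then show "poly q x = 0" using q[rule_format, of x] by (simp add: relu_def)
  qed simp
  then show False using q[rule_format, of 1] by (simp add: relu_def)
qed


inductive_set fspan :: "(nat \<Rightarrow> 'a::field) set \<Rightarrow> (nat \<Rightarrow> 'a) set" for S where
  base: "f \<in> S \<Longrightarrow> f \<in> fspan S"
| zero: "(\<lambda>i. 0) \<in> fspan S"
| add: "f \<in> fspan S \<Longrightarrow> h \<in> fspan S \<Longrightarrow> (\<lambda>i. f i + h i) \<in> fspan S"
| smul: "f \<in> fspan S \<Longrightarrow> (\<lambda>i. c * f i) \<in> fspan S"

lemma fspan_sum:
  assumes "finite A" "\<And>x. x \<in> A \<Longrightarrow> F x \<in> fspan S"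
  shows "(\<lambda>i. \<Sum>x\<in>A. F x i) \<in> fspan S"
  using assms
proof (induction A rule: finite_induct)
  case empty then show ?case by (simp add: fspan.zero)
next
  case (insert a A)
  have "(\<lambda>i. F a i + (\<Sum>x\<in>A. F x i)) \<in> fspan S"
    by (rule fspan.add) (use insert in auto)
  then show ?case using insert by simp
qed

lemma (in vec_space) fspan_vec:
  assumes "f \<in> fspan S"
  shows "vec n f \<in> span ((\<lambda>h. vec n h) ` S)"
  using assms
proof (induction rule: fspan.induct)
  case (base f) show ?case by (rule span_mem) (use base in auto)
next
  case zero
  have U: "(\<lambda>h. vec n h) ` S \<subseteq> carrier_vec n" by auto
  have "zero V \<in> span ((\<lambda>h. vec n h) ` S)" by (rule submodule.zero_closed[OF span_is_submodule[OF U]])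
  moreover have "vec n (\<lambda>i. 0::'a) = 0\<^sub>v n" by auto
  ultimately show ?case by simp
next
  case (add f h)
  have U: "(\<lambda>h. vec n h) ` S \<subseteq> carrier_vec n" by auto
  have "vec n f + vec n h \<in> span ((\<lambda>h. vec n h) ` S)"
    using span_add1[OF U add.IH] by simp
  moreover have "vec n (\<lambda>i. f i + h i) = vec n f + vec n h" by auto
  ultimately show ?case by simp
next
  case (smul f c)
  have U: "(\<lambda>h. vec n h) ` S \<subseteq> carrier_vec n" by auto
  have "c \<cdot>\<^sub>v vec n f \<in> span ((\<lambda>h. vec n h) ` S)"
    using submodule.smult_closed[OF span_is_submodule[OF U], of c "vec n f"] smul.IH by simp
  moreover have "vec n (\<lambda>i. c * f i) = c \<cdot>\<^sub>v vec n f" by auto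
  ultimately show ?case by simp
qed

lemma (in vec_space) dim_span_le_card:
  assumes S: "finite S" "S \<subseteq> carrier_vec n"
  shows "vectorspace.dim class_ring (vs (span S)) \<le> card S"
proof -
  have vs: "vectorspace class_ring (span_vs S)"
    using S span_is_subspace subspace_def subspace_is_vs by simp
  have sub: "S \<subseteq> span S" using S in_own_span by simp
  have sm: "submodule class_ring (span S) V" using S span_is_submodule by simp
  have gen: "LinearCombinations.module.span class_ring (vs (span S)) S = carrier (vs (span S))"
    using span_li_not_depend(1)[OF sub sm] by auto
  show ?thesis using vectorspace.gen_ge_dim[OF vs S(1)] sub gen by simp
qed

lemma (in vec_space) rank_le_card_span:
  assumes A: "A \<in> carrier_mat n nc" and S: "finite S" "S \<subseteq> carrier_vec n"
    and sub: "set (cols A) \<subseteq> span S"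
  shows "rank A \<le> card S"
proof -
  have vs: "vectorspace class_ring (vs (span S))"
    using span_is_subspace[THEN subspace_is_vs, of S] S by auto
  have sm: "submodule class_ring (span S) V" by (simp add: span_is_submodule S)
  have sub2: "subspace class_ring (span (set (cols A))) (vs (span S))"
    using vectorspace.span_is_subspace[OF vs, of "set (cols A)", unfolded span_li_not_depend(1)[OF sub sm]] sub
    by auto
  have fin_dim: "vectorspace.fin_dim class_ring (vs (span S))"
       "vectorspace.fin_dim class_ring (vs (span S)\<lparr>carrier := span (set (cols A))\<rparr>)"
    using fin_dim_span fin_dim_span_cols A S by auto
  have "rank A \<le> vectorspace.dim class_ring (vs (span S))"
    unfolding rank_def using vectorspace.subspace_dim[OF vs sub2 fin_dim(1) fin_dim(2)] by simp
  also have "... \<le> card S" by (rule dim_span_le_card[OF S])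
  finally show ?thesis .
qed

lemma (in vec_space) rank_le_fspan:
  assumes A: "A \<in> carrier_mat n nc" and S: "finite S"
    and cols: "\<And>j. j < nc \<Longrightarrow> \<exists>f\<in>fspan S. \<forall>i<n. A $$ (i,j) = f i"
  shows "rank A \<le> card S"
proof -
  define VS where "VS = (\<lambda>h. vec n h) ` S"
  have VS: "finite VS" "VS \<subseteq> carrier_vec n" using S by (auto simp: VS_def)
  have "set (cols A) \<subseteq> span VS"
  proof
    fix v assume "v \<in> set (cols A)"
    then obtain j where j: "j < nc" "v = col A j" using A by (auto simp: cols_def)
    obtain f where f: "f \<in> fspan S" "\<forall>i<n. A $$ (i,j) = f i" using cols[OF j(1)] by blast
    have "v = vec n f" using j f A by (auto simp: col_def)
    then show "v \<in> span VS" using fspan_vec[OF f(1)] by (simp add: VS_def)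
  qed
  then have "rank A \<le> card VS" by (rule rank_le_card_span[OF A VS])
  also have "card VS \<le> card S" unfolding VS_def by (rule card_image_le[OF S])
  finally show ?thesis .
qed


definition mono_val :: "real mat \<Rightarrow> nat \<Rightarrow> nat multiset \<Rightarrow> nat \<Rightarrow> real" where
  "mono_val X d M i = (\<Prod>k\<in>#M. (if k < d then X $$ (i,k) else 1))"

lemma mono_add_lt: "k < d \<Longrightarrow> mono_val X d (add_mset k M) i = X $$ (i,k) * mono_val X d M i"
  by (simp add: mono_val_def)

lemma mono_add_d: "mono_val X d (add_mset d M) i = mono_val X d M i"
  by (simp add: mono_val_def)

lemma mono_rep: "mono_val X d (M + replicate_mset r d) i = mono_val X d M i"
  by (induction r) (simp_all add: mono_val_def)

lemma mono_empty: "mono_val X d {#} i = 1"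
  by (simp add: mono_val_def)

lemma poly_span:
  fixes X :: "real mat" and w :: "nat \<Rightarrow> real" and \<beta> :: real and q :: "real poly"
  shows "(\<lambda>i. poly q ((\<Sum>k<d. X $$ (i,k) * w k) + \<beta>)) \<in>
     fspan ((\<lambda>M. mono_val X d M) ` multisets_of_size {0..d} (degree q))"
proof -
  define S where "S = (\<lambda>M. mono_val X d M) ` multisets_of_size {0..d} (degree q)"
  define p where "p = degree q"
  define y where "y i = (\<Sum>k<d. X $$ (i,k) * w k) + \<beta>" for i
  have key: "\<forall>M. set_mset M \<subseteq> {0..d} \<and> size M + r \<le> p \<longrightarrow> (\<lambda>i. y i ^ r * mono_val X d M i) \<in> fspan S" for r
  proof (induction r)
    case 0
    show ?case
    proof (rule allI, rule impI)
      fix M :: "nat multiset" assume M: "set_mset M \<subseteq> {0..d} \<and> size M + 0 \<le> p"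
      define M' where "M' = M + replicate_mset (p - size M) d"
      have "M' \<in> multisets_of_size {0..d} p" using M by (auto simp: M'_def multisets_of_size_def)
      then have "mono_val X d M' \<in> S" by (simp add: S_def p_def)
      moreover have "mono_val X d M' = (\<lambda>i. y i ^ 0 * mono_val X d M i)"
        by (simp add: M'_def mono_rep fun_eq_iff)
      ultimately show "(\<lambda>i. y i ^ 0 * mono_val X d M i) \<in> fspan S" using fspan.base by metis
    qed
  next
    case (Suc r)
    show ?case
    proof (rule allI, rule impI)
      fix M :: "nat multiset" assume M: "set_mset M \<subseteq> {0..d} \<and> size M + Suc r \<le> p"
      have IHk: "(\<lambda>i. y i ^ r * mono_val X d (add_mset k M) i) \<in> fspan S" if "k \<le> d" for k
        using Suc.IH M that by auto
      have A: "(\<lambda>i. \<Sum>k<d. w k * (y i ^ r * mono_val X d (add_mset k M) i)) \<in> fspan S"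
      proof (rule fspan_sum)
        fix k assume "k \<in> {..<d}"
        then have "k \<le> d" by simp
        from IHk[OF this] show "(\<lambda>i. w k * (y i ^ r * mono_val X d (add_mset k M) i)) \<in> fspan S"
          by (rule fspan.smul)
      qed simp
      have B: "(\<lambda>i. \<beta> * (y i ^ r * mono_val X d (add_mset d M) i)) \<in> fspan S"
        by (rule fspan.smul, rule IHk) simp
      have eq: "y i ^ Suc r * mono_val X d M i =
          (\<Sum>k<d. w k * (y i ^ r * mono_val X d (add_mset k M) i)) + \<beta> * (y i ^ r * mono_val X d (add_mset d M) i)"
        for i
      proof -
        have s: "(\<Sum>k<d. w k * (y i ^ r * mono_val X d (add_mset k M) i)) =
            (\<Sum>k<d. X $$ (i,k) * w k) * (y i ^ r * mono_val X d M i)"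
          unfolding sum_distrib_right by (intro sum.cong refl) (simp add: mono_add_lt)
        show ?thesis unfolding s mono_add_d by (simp add: y_def algebra_simps)
      qed
      have "(\<lambda>i. y i ^ Suc r * mono_val X d M i) = (\<lambda>i. (\<Sum>k<d. w k * (y i ^ r * mono_val X d (add_mset k M) i)) + \<beta> * (y i ^ r * mono_val X d (add_mset d M) i))"
        using eq by (rule ext)
      then show "(\<lambda>i. y i ^ Suc r * mono_val X d M i) \<in> fspan S" using fspan.add[OF A B] by simp
    qed
  qed
  have "(\<lambda>i. poly q (y i)) = (\<lambda>i. \<Sum>r\<le>degree q. coeff q r * (y i ^ r * mono_val X d {#} i))"
    by (simp add: poly_altdef mono_empty)
  moreover have "(\<lambda>i. \<Sum>r\<le>degree q. coeff q r * (y i ^ r * mono_val X d {#} i)) \<in> fspan S"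
  proof (rule fspan_sum)
    fix r assume r: "r \<in> {..degree q}"
    have "(\<lambda>i. y i ^ r * mono_val X d {#} i) \<in> fspan S" using key[of r] r by (simp add: p_def)
    then show "(\<lambda>i. coeff q r * (y i ^ r * mono_val X d {#} i)) \<in> fspan S" by (rule fspan.smul)
  qed simp
  ultimately show ?thesis by (simp add: y_def S_def)
qed

lemma poly_rank:
  fixes X W :: "real mat" and q :: "real poly"
  assumes X: "X \<in> carrier_mat N d" and W: "W \<in> carrier_mat d m"
  shows "vec_space.rank N (layer (poly q) X W b) \<le> (degree q + d) choose degree q"
proof -
  define S where "S = (\<lambda>M. mono_val X d M) ` multisets_of_size {0..d} (degree q)"
  define A where "A = layer (poly q) X W b"
  have Ac: "A \<in> carrier_mat N m" using X W by (simp add: A_def layer_def pre_act_def)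
  have finMs: "finite (multisets_of_size {0..d} (degree q))" by (simp add: finite_multisets_of_size)
  then have finS: "finite S" by (simp add: S_def)
  have "vec_space.rank N A \<le> card S"
  proof (rule vec_space.rank_le_fspan[OF Ac finS])
    fix j assume j: "j < m"
    let ?f = "\<lambda>i. poly q ((\<Sum>k<d. X $$ (i,k) * W $$ (k,j)) + b $ j)"
    have "?f \<in> fspan S" unfolding S_def by (rule poly_span)
    moreover have "\<forall>i<N. A $$ (i,j) = ?f i"
      using layer_entry[OF X W _ j] by (simp add: A_def)
    ultimately show "\<exists>f\<in>fspan S. \<forall>i<N. A $$ (i,j) = f i" by (rule bexI[rotated, where x="\<lambda>i. poly q ((\<Sum>k<d. X $$ (i,k) * W $$ (k,j)) + b $ j)"])
  qed
  also have "card S \<le> card (multisets_of_size {0..d} (degree q))"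
    unfolding S_def by (rule card_image_le[OF finMs])
  also have "... = (degree q + d) choose degree q"
    by (simp add: card_multisets_of_size add.commute)
  finally show ?thesis by (simp add: A_def)
qed


theorem theorem1:
  fixes g :: "real \<Rightarrow> real" and X :: "real mat" and N d :: nat
  assumes X: "X \<in> carrier_mat N d"
    and distinct_rows: "distinct (rows X)"
  shows
   "((\<exists>I. open_interval I \<and> \<not> polynomial_on g I \<and> (\<exists>x0\<in>I. smooth_at g x0)) \<longrightarrow>
       (\<forall>m. d < m \<and> m \<le> N \<longrightarrow>
          (\<exists>W b. W \<in> carrier_mat d m \<and> b \<in> carrier_vec m \<and>
                 vec_space.rank N (layer g X W b) = m)))
    \<and> (\<forall>m. d < m \<and> m \<le> N \<longrightarrow>
          (\<exists>W b. W \<in> carrier_mat d m \<and> b \<in> carrier_vec m \<and>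
                 vec_space.rank N (layer relu X W b) = m))
    \<and> (\<forall>(q :: real poly) p. g = poly q \<and> degree q = p \<longrightarrow>
          (\<forall>m W b. W \<in> carrier_mat d m \<and> b \<in> carrier_vec m \<longrightarrow>
                 vec_space.rank N (layer g X W b) \<le> (p + d) choose p))"
proof (intro conjI)
  show "(\<exists>I. open_interval I \<and> \<not> polynomial_on g I \<and> (\<exists>x0\<in>I. smooth_at g x0)) \<longrightarrow>
       (\<forall>m. d < m \<and> m \<le> N \<longrightarrow>
          (\<exists>W b. W \<in> carrier_mat d m \<and> b \<in> carrier_vec m \<and>
                 vec_space.rank N (layer g X W b) = m))"
  proof (rule impI, rule allI, rule impI)
    fix m assume H: "\<exists>I. open_interval I \<and> \<not> polynomial_on g I \<and> (\<exists>x0\<in>I. smooth_at g x0)"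
      and m: "d < m \<and> m \<le> N"
    from H obtain I x0 where I: "\<not> polynomial_on g I" and x0: "smooth_at g x0" by blast
    have np: "\<not> (\<exists>q. \<forall>x. g x = poly q x)"
    proof
      assume "\<exists>q. \<forall>x. g x = poly q x"
      then have "polynomial_on g I" unfolding polynomial_on_def by blast
      then show False using I by simp
    qed
    show "\<exists>W b. W \<in> carrier_mat d m \<and> b \<in> carrier_vec m \<and> vec_space.rank N (layer g X W b) = m"
      by (rule nonpoly_main[OF X distinct_rows x0 np]) (use m in simp)
  qed
next
  show "\<forall>m. d < m \<and> m \<le> N \<longrightarrow>
          (\<exists>W b. W \<in> carrier_mat d m \<and> b \<in> carrier_vec m \<and>
                 vec_space.rank N (layer relu X W b) = m)"
  proof (rule allI, rule impI)
    fix m assume m: "d < m \<and> m \<le> N"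
    show "\<exists>W b. W \<in> carrier_mat d m \<and> b \<in> carrier_vec m \<and> vec_space.rank N (layer relu X W b) = m"
      by (rule nonpoly_main[OF X distinct_rows relu_smooth relu_not_poly]) (use m in simp)
  qed
next
  show "\<forall>(q :: real poly) p. g = poly q \<and> degree q = p \<longrightarrow>
          (\<forall>m W b. W \<in> carrier_mat d m \<and> b \<in> carrier_vec m \<longrightarrow>
                 vec_space.rank N (layer g X W b) \<le> (p + d) choose p)"
  proof (intro allI impI)
    fix q :: "real poly" and p m and W :: "real mat" and b :: "real vec"
    assume qp: "g = poly q \<and> degree q = p" and Wb: "W \<in> carrier_mat d m \<and> b \<in> carrier_vec m"
    from Wb have W: "W \<in> carrier_mat d m" by simp
    have "vec_space.rank N (layer (poly q) X W b) \<le> (degree q + d) choose degree q"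
      by (rule poly_rank[OF X W])
    then show "vec_space.rank N (layer g X W b) \<le> (p + d) choose p" using qp by simp
  qed
qed


end
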